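(* Let $f=(f_{\{i,j\}})_{j\ge i\ge-1}$ be any element of the $\mathrm{fin}_2(\mathbb{N})$-simplex, let $X_1,X_2,\dots$ be i.i.d. with $\mathrm{pr}(X_k=\{i,j\}\mid f)=f_{\{i,j\}}$, and let $\mathcal{Y}=\mathcal{E}_{\mathcal{X}}$ be the edge-labeled network induced by the selection function $\mathcal{X}:\mathbb{N}\to\mathrm{fin}_2(\mathbb{Z})$ constructed from $X_1,X_2,\dots$. Then $\mathcal{Y}$ is edge exchangeable.
   Context: $\mathrm{fin}_2(\mathcal{P})$ is the set of size-2 multisets $\{i,j\}$ of $\mathcal{P}$ (undirected edges, loops allowed). An interaction process $\mathcal{I}:S\to\mathrm{fin}_2(\mathcal{P})$ ($S\subseteq\mathbb{N}$) induces the edge-labeled network $\mathcal{E}_{\mathcal{I}}$, the equivalence class of $\mathcal{I}$ under relabeling vertices by bijections of the population, keeping edge labels in $S$. For a permutation $\sigma$ of $S$, $\mathcal{E}^\sigma$ is induced by $\mathcal{I}^\sigma(i)=\mathcal{I}(\sigma^{-1}(i))$; a random edge-labeled network $\mathcal{Y}$ is edge exchangeable if $\mathcal{Y}^\sigma$ has the same law as $\mathcal{Y}$ for all permutations $\sigma$ of $S$. The $\mathrm{fin}_2(\mathbb{N})$-simplex is the set of $(f_{\{i,j\}})_{j\ge i\ge-1}$ (indices in $\{-1,0,1,2,\dots\}$) with $f_{\{i,j\}}\ge0$, $f_{\{-1,i\}}=0$ for all $i\ne0$, and $\sum_{j\ge i\ge-1}f_{\{i,j\}}=1$. Construction of $\mathcal{X}$: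 set $m_0=0$. For $n\ge1$ with $m_{n-1}=z\le0$: if $X_n$ contains neither $0$ nor $-1$, put $\mathcal{X}(n)=X_n$, $m_n=z$; if $X_n=\{0,j\}$ with $j\ge1$, put $\mathcal{X}(n)=\{z-1,j\}$, $m_n=z-1$; if $X_n=\{0,0\}$, put $\mathcal{X}(n)=\{z-1,z-1\}$, $m_n=z-1$; if $X_n=\{-1,0\}$, put $\mathcal{X}(n)=\{z-1,z-2\}$, $m_n=z-2$. (Thus events involving $0$ or $-1$ create fresh vertices that never reappear.) *)

theory Defs
  imports "HOL-Probability.Probability" "HOL-Library.Uprod"
begin

text \<open>Size-2 multisets of integers are represented by the library type int uprod
  (unordered pairs, loops allowed).  Index -1 and 0 are the special indices.\<close>

definition fin2_simplex :: "(int uprod \<Rightarrow> real) set" where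
  "fin2_simplex = {f.
      (\<forall>e. f e \<ge> 0)
    \<and> (\<forall>e. f e \<noteq> 0 \<longrightarrow> (\<forall>x\<in>set_uprod e. x \<ge> -1))
    \<and> (\<forall>i. i \<noteq> 0 \<longrightarrow> f (Upair (-1) i) = 0)
    \<and> (f has_sum 1) UNIV}"

text \<open>One step of the construction: given the current value z = m_(n-1) and the
  draw X_n, return (script X(n), m_n).\<close>

definition constr_step :: "int \<Rightarrow> int uprod \<Rightarrow> int uprod \<times> int" where
  "constr_step z x =
     (if 0 \<notin> set_uprod x \<and> -1 \<notin> set_uprod x then (x, z)
      else if x = Upair (-1) 0 then (Upair (z - 1) (z - 2), z - 2)
      else if x = Upair 0 0 then (Upair (z - 1) (z - 1), z - 1)
      else if (\<exists>j. j \<ge> 1 \<and> x = Upair 0 j)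
        then (Upair (z - 1) (THE j. j \<ge> 1 \<and> x = Upair 0 j), z - 1)
      else (x, z))"  \<comment> \<open>last branch: probability-zero draws, irrelevant\<close>

text \<open>m-sequence: constr_m w n = m_n, where the stream w holds X_1, X_2, ...
  (w !! k = X_(k+1)).\<close>

primrec constr_m :: "int uprod stream \<Rightarrow> nat \<Rightarrow> int" where
  "constr_m w 0 = 0"
| "constr_m w (Suc n) = snd (constr_step (constr_m w n) (w !! n))"

text \<open>The selection function: constr_X w k = script X(k+1) (edge labels shifted to start at 0).\<close>

definition constr_X :: "int uprod stream \<Rightarrow> nat \<Rightarrow> int uprod" where
  "constr_X w k = fst (constr_step (constr_m w k) (w !! k))"

definition proc_space :: "(nat \<Rightarrow> int uprod) measure" where
  "proc_space = Pi\<^sub>M UNIV (\<lambda>_. count_space UNIV)"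

text \<open>A set of interaction processes is a union of edge-labeled networks iff it is
  invariant under relabeling vertices by bijections of the population.  Measurable
  invariant sets are exactly the preimages of measurable sets of the quotient
  (edge-labeled networks) under the quotient sigma-algebra.\<close>

definition relabel_invariant :: "(nat \<Rightarrow> int uprod) set \<Rightarrow> bool" where
  "relabel_invariant A \<longleftrightarrow>
     (\<forall>\<phi> :: int \<Rightarrow> int. bij \<phi> \<longrightarrow> (\<forall>I. I \<in> A \<longleftrightarrow> (map_uprod \<phi> \<circ> I) \<in> A))"

definition edge_exchangeable ::
    "'w measure \<Rightarrow> ('w \<Rightarrow> nat \<Rightarrow> int uprod) \<Rightarrow> bool" where
  "edge_exchangeable M Y \<longleftrightarrow>
     (\<forall>\<sigma> :: nat \<Rightarrow> nat. bij \<sigma> \<longrightarrow>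
        (\<forall>A \<in> sets proc_space. relabel_invariant A \<longrightarrow>
           emeasure (distr M proc_space (\<lambda>w. Y w \<circ> inv \<sigma>)) A
             = emeasure (distr M proc_space Y) A))"

end

theory Submission
  imports Defs
begin

definition cnt :: "int uprod \<Rightarrow> int" where
  "cnt x = (if 0 \<notin> set_uprod x \<and> -1 \<notin> set_uprod x then 0
     else if x = Upair (-1) 0 then 2 else if x = Upair 0 0 then 1
     else if (\<exists>j. j \<ge> 1 \<and> x = Upair 0 j) then 1 else 0)"

lemma cnt_nonneg: "cnt x \<ge> 0" by (simp add: cnt_def)

lemma snd_step: "snd (constr_step z x) = z - cnt x"
  unfolding constr_step_def cnt_def by auto

lemma m_Suc: "constr_m w (Suc n) = constr_m w n - cnt (w !! n)"
  by (simp add: snd_step)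

declare constr_m.simps(2)[simp del]

lemma m_sum: "constr_m w n = - (\<Sum>k<n. cnt (w !! k))"
  by (induction n) (simp_all add: m_Suc)

lemma m_mono: "n \<le> n' \<Longrightarrow> constr_m w n' \<le> constr_m w n"
proof (induction n' rule: dec_induct)
  case (step k) then show ?case using cnt_nonneg[of "w!!k"] by (simp add: m_Suc)
qed simp

definition good :: "int uprod \<Rightarrow> bool" where
  "good x \<longleftrightarrow> (\<forall>y\<in>set_uprod x. y \<ge> 1) \<or> x = Upair (-1) 0 \<or> x = Upair 0 0
     \<or> (\<exists>j. j \<ge> 1 \<and> x = Upair 0 j)"

definition SS :: "int uprod stream \<Rightarrow> (nat \<times> int) set" where
  "SS w = {(n, s). 1 \<le> s \<and> s \<le> cnt (w !! n)}"

definition LL :: "int uprod stream \<Rightarrow> nat \<times> int \<Rightarrow> int" where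
  "LL w p = constr_m w (fst p) - snd p"

definition FF :: "int uprod stream \<Rightarrow> int set" where
  "FF w = {l. l < 0 \<and> (\<exists>n. constr_m w n \<le> l)}"

lemma LL_inj: "inj_on (LL w) (SS w)"
proof (rule inj_onI, clarify)
  fix n s n' s' assume a: "(n, s) \<in> SS w" "(n', s') \<in> SS w" "LL w (n, s) = LL w (n', s')"
  have *: False if "(a, b) \<in> SS w" "(a', b') \<in> SS w" "LL w (a, b) = LL w (a', b')" "a < a'" for a b a' b'
  proof -
    have "constr_m w a' \<le> constr_m w (Suc a)" using m_mono that(4) by simp
    then show False using that by (simp add: SS_def LL_def m_Suc)
  qed
  have "n = n'" using *[OF a] *[OF a(2,1) a(3)[symmetric]] by (meson linorder_neqE_nat)
  then show "n = n' \<and> s = s'" using a(3) by (simp add: LL_def)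
qed

lemma descent: "constr_m w N \<le> l \<Longrightarrow> l < 0 \<Longrightarrow> \<exists>n. l < constr_m w n \<and> constr_m w (Suc n) \<le> l"
proof (induction N)
  case (Suc N) then show ?case proof (cases "constr_m w N \<le> l")
    case False then show ?thesis using Suc.prems by (intro exI[of _ N]) auto
  qed (use Suc in auto)
qed simp

lemma LL_image: "LL w ` SS w = FF w"
proof
  show "LL w ` SS w \<subseteq> FF w"
  proof clarify
    fix n s assume "(n, s) \<in> SS w"
    then show "LL w (n, s) \<in> FF w"
      using m_mono[of 0 n w] by (auto simp: SS_def LL_def FF_def m_Suc intro!: exI[of _ "Suc n"])
  qed
  show "FF w \<subseteq> LL w ` SS w"
  proof
    fix l assume "l \<in> FF w"
    then obtain N where "l < 0" "constr_m w N \<le> l" by (auto simp: FF_def)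
    from descent[OF this(2,1)] obtain n where n: "l < constr_m w n" "constr_m w (Suc n) \<le> l" by blast
    then have "(n, constr_m w n - l) \<in> SS w" by (auto simp: SS_def m_Suc)
    moreover have "LL w (n, constr_m w n - l) = l" by (simp add: LL_def)
    ultimately show "l \<in> LL w ` SS w" by (metis image_eqI)
  qed
qed

lemma FF_sub:
  assumes "inj \<tau>" "\<And>k. u !! k = v !! (\<tau> k)"
  shows "FF u \<subseteq> FF v"
proof
  fix l assume "l \<in> FF u"
  then obtain n where l: "l < 0" "constr_m u n \<le> l" by (auto simp: FF_def)
  obtain N where N: "\<forall>x\<in>\<tau> ` {..<n}. x < N"
    using finite_nat_bounded[of "\<tau> ` {..<n}"] by auto
  have "(\<Sum>k<n. cnt (u !! k)) = (\<Sum>k\<in>\<tau> ` {..<n}. cnt (v !! k))"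
    using assms by (simp add: sum.reindex inj_on_subset)
  also have "\<dots> \<le> (\<Sum>k<N. cnt (v !! k))"
    using N by (intro sum_mono2) (auto simp: cnt_nonneg)
  finally have "constr_m v N \<le> constr_m u n" by (simp add: m_sum)
  then show "l \<in> FF v" using l by (auto simp: FF_def intro!: exI[of _ N])
qed

lemma relabel:
  assumes bs: "bij \<sigma>" and gd: "\<forall>n. good (u !! n)" and uv: "\<And>k. v !! k = u !! (inv \<sigma> k)"
  shows "\<exists>\<phi>. bij \<phi> \<and> map_uprod \<phi> \<circ> (constr_X u \<circ> inv \<sigma>) = constr_X v"
proof -
  have isg: "inv \<sigma> (\<sigma> n) = n" for n using bs by (simp add: bij_is_inj)
  have si: "\<sigma> (inv \<sigma> k) = k" for k using bs by (simp add: bij_is_surj surj_f_inv_f)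
  have vu: "u !! n = v !! (\<sigma> n)" for n using uv isg by simp
  have F: "FF u = FF v"
    using FF_sub[of \<sigma> u v] FF_sub[of "inv \<sigma>" v u] bs vu uv bij_is_inj bij_imp_bij_inv by blast
  define h where "h = (\<lambda>(n::nat, s::int). (\<sigma> n, s))"
  have hb: "bij_betw h (SS u) (SS v)"
    unfolding bij_betw_def
  proof
    show "inj_on h (SS u)" using bs unfolding h_def by (auto intro!: inj_onI simp: bij_is_inj inj_eq)
    show "h ` SS u = SS v"
    proof
      show "h ` SS u \<subseteq> SS v" by (auto simp: h_def SS_def vu)
      show "SS v \<subseteq> h ` SS u"
      proof clarify
        fix k s assume "(k, s) \<in> SS v"
        then have "(inv \<sigma> k, s) \<in> SS u" by (simp add: SS_def uv)
        moreover have "h (inv \<sigma> k, s) = (k, s)" by (simp add: h_def si)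
        ultimately show "(k, s) \<in> h ` SS u" by (metis image_eqI)
      qed
    qed
  qed
  have Lu: "bij_betw (LL u) (SS u) (FF u)" using LL_inj LL_image by (simp add: bij_betw_def)
  have Lv: "bij_betw (LL v) (SS v) (FF u)" using LL_inj LL_image F by (simp add: bij_betw_def)
  define \<psi> where "\<psi> = LL v \<circ> h \<circ> inv_into (SS u) (LL u)"
  have pb: "bij_betw \<psi> (FF u) (FF u)"
    using bij_betw_trans[OF bij_betw_trans[OF bij_betw_inv_into[OF Lu] hb] Lv] unfolding \<psi>_def by (simp add: comp_assoc)
  define \<phi> where "\<phi> l = (if l \<in> FF u then \<psi> l else l)" for l
  have "bij_betw \<phi> (FF u \<union> - FF u) (FF u \<union> - FF u)"
  proof (rule bij_betw_combine)
    show "bij_betw \<phi> (FF u) (FF u)" using pb by (rule bij_betw_cong[THEN iffD1, rotated]) (simp add: \<phi>_def)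
    show "bij_betw \<phi> (- FF u) (- FF u)" by (rule bij_betw_cong[THEN iffD1, rotated, OF bij_betw_id]) (simp add: \<phi>_def)
  qed auto
  then have bp: "bij \<phi>" by simp
  have key: "\<phi> (LL u p) = LL v (h p)" if "p \<in> SS u" for p
  proof -
    have "LL u p \<in> FF u" using that LL_image by blast
    then show ?thesis using that LL_inj by (simp add: \<phi>_def \<psi>_def)
  qed
  have pos: "\<phi> l = l" if "l \<ge> 0" for l using that by (simp add: \<phi>_def FF_def)
  have "map_uprod \<phi> (constr_X u n) = constr_X v (\<sigma> n)" for n
  proof -
    define x where "x = u !! n"
    have xv: "v !! (\<sigma> n) = x" using vu x_def by simp
    have g: "good x" using gd x_def by simp
    have cx: "cnt x = cnt (u !! n)" by (simp add: x_def)
    show ?thesis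
      unfolding good_def
    proof -
      consider "\<forall>y\<in>set_uprod x. y \<ge> 1" | "x = Upair (-1) 0" | "x = Upair 0 0"
        | j where "j \<ge> 1" "x = Upair 0 j" using g unfolding good_def by blast
      then show ?thesis
      proof cases
        case 1
        then have nz: "0 \<notin> set_uprod x \<and> -1 \<notin> set_uprod x" by force
        have "\<phi> z = id z" if "z \<in> set_uprod x" for z using 1 that pos[of z] by force
        then have "map_uprod \<phi> x = map_uprod id x" by (rule uprod.map_cong[OF refl])
        then show ?thesis using nz by (simp add: constr_X_def constr_step_def x_def[symmetric] xv uprod.map_id)
      next
        case 2
        have c: "cnt x = 2" using 2 by (simp add: cnt_def)
        have k1: "\<phi> (constr_m u n - 1) = constr_m v (\<sigma> n) - 1"
          using key[of "(n, 1)"] c by (simp add: LL_def h_def SS_def x_def)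
        have k2: "\<phi> (constr_m u n - 2) = constr_m v (\<sigma> n) - 2"
          using key[of "(n, 2)"] c by (simp add: LL_def h_def SS_def x_def)
        show ?thesis using 2 k1 k2 by (simp add: constr_X_def constr_step_def x_def[symmetric] xv)
      next
        case 3
        have c: "cnt x = 1" using 3 by (simp add: cnt_def)
        have k1: "\<phi> (constr_m u n - 1) = constr_m v (\<sigma> n) - 1"
          using key[of "(n, 1)"] c by (simp add: LL_def h_def SS_def x_def)
        show ?thesis using 3 k1 by (simp add: constr_X_def constr_step_def x_def[symmetric] xv)
      next
        case 4
        have c: "cnt x = 1" using 4 by (auto simp: cnt_def)
        have k1: "\<phi> (constr_m u n - 1) = constr_m v (\<sigma> n) - 1"
          using key[of "(n, 1)"] c by (simp add: LL_def h_def SS_def x_def)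
        have th: "(THE j'. j' \<ge> 1 \<and> x = Upair 0 j') = j"
          using 4 by (intro the_equality) auto
        have ne: "x \<noteq> Upair (-1) 0" "x \<noteq> Upair 0 0" using 4 by auto
        have "0 \<in> set_uprod x" using 4 by simp
        then show ?thesis using 4 k1 th ne pos[of j]
          by (simp add: constr_X_def constr_step_def x_def[symmetric] xv)
      qed
    qed
  qed
  then have "map_uprod \<phi> \<circ> (constr_X u \<circ> inv \<sigma>) = constr_X v"
    by (metis (no_types, lifting) comp_apply si ext)
  with bp show ?thesis by blast
qed


lemma good_of_simplex:
  assumes f: "pmf p \<in> fin2_simplex" and x: "pmf p x \<noteq> 0"
  shows "good x"
proof -
  have ge: "\<forall>y\<in>set_uprod x. y \<ge> -1" using f x by (auto simp: fin2_simplex_def)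
  have z: "\<And>i. i \<noteq> 0 \<Longrightarrow> pmf p (Upair (-1) i) = 0" using f by (auto simp: fin2_simplex_def)
  obtain a b where ab: "x = Upair a b" by (cases x) auto
  have a1: "a \<ge> -1" "b \<ge> -1" using ge ab by auto
  have a2: "a = -1 \<Longrightarrow> b = 0" using z x ab by force
  have a3: "b = -1 \<Longrightarrow> a = 0" proof - assume "b = -1" moreover have "Upair a (-1) = Upair (-1) a" by simp ultimately show "a = 0" using z[of a] x ab by metis qed
  have c: "a = -1 \<or> b = -1 \<or> (a = 0 \<and> b = 0) \<or> (a = 0 \<and> b \<ge> 1) \<or> (a \<ge> 1 \<and> b = 0) \<or> (a \<ge> 1 \<and> b \<ge> 1)"
    using a1 by linarith
  show ?thesis
  proof -
    { assume "a = -1" then have ?thesis using a2 ab by (simp add: good_def) }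
    moreover { assume "b = -1" then have ?thesis using a3 ab by (simp add: good_def) }
    moreover { assume "a = 0 \<and> b = 0" then have ?thesis using ab by (simp add: good_def) }
    moreover { assume "a = 0 \<and> b \<ge> 1" then have ?thesis using ab unfolding good_def by blast }
    moreover { assume "a \<ge> 1 \<and> b = 0" then have ?thesis using ab unfolding good_def by auto }
    moreover { assume "a \<ge> 1 \<and> b \<ge> 1" then have ?thesis using ab unfolding good_def by auto }
    ultimately show ?thesis using c by blast
  qed
qed

lemma meas_m: "(\<lambda>w. constr_m w n) \<in> measurable (stream_space (measure_pmf p)) (count_space UNIV)"
proof (induction n)
  case 0 then show ?case by simp
next
  case (Suc n)
  have "(\<lambda>w. (\<lambda>z w. snd (constr_step z (w !! n))) (constr_m w n) w) \<in> measurable (stream_space (measure_pmf p)) (count_space UNIV)"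
  proof (rule measurable_compose_countable'[OF _ Suc])
    fix z :: int
    show "(\<lambda>w. snd (constr_step z (w !! n))) \<in> measurable (stream_space (measure_pmf p)) (count_space UNIV)"
      by (rule measurable_compose[OF measurable_snth]) simp
  qed simp
  then show ?case by (simp add: constr_m.simps(2))
qed

lemma meas_Xk: "(\<lambda>w. constr_X w k) \<in> measurable (stream_space (measure_pmf p)) (count_space UNIV)"
proof -
  have "(\<lambda>w. (\<lambda>z w. fst (constr_step z (w !! k))) (constr_m w k) w) \<in> measurable (stream_space (measure_pmf p)) (count_space UNIV)"
  proof (rule measurable_compose_countable'[OF _ meas_m])
    fix z :: int
    show "(\<lambda>w. fst (constr_step z (w !! k))) \<in> measurable (stream_space (measure_pmf p)) (count_space UNIV)"
      by (rule measurable_compose[OF measurable_snth]) simp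
  qed simp
  then show ?thesis by (simp add: constr_X_def)
qed

lemma meas_proc:
  assumes "\<And>k. (\<lambda>w. F w k) \<in> measurable M (count_space UNIV)"
  shows "F \<in> measurable M proc_space"
proof -
  have "(\<lambda>w k. F w k) \<in> measurable M proc_space"
    unfolding proc_space_def by (rule measurable_PiM_single') (use assms in auto)
  then show ?thesis by simp
qed

definition perm :: "(nat \<Rightarrow> nat) \<Rightarrow> 'a stream \<Rightarrow> 'a stream" where
  "perm \<sigma> w = to_stream (\<lambda>k. w !! inv \<sigma> k)"

lemma perm_snth: "perm \<sigma> w !! k = w !! inv \<sigma> k"
  by (simp add: perm_def to_stream_def)

lemma meas_perm: "perm \<sigma> \<in> measurable (stream_space M) (stream_space M)"
proof -
  have "(\<lambda>x k. x !! inv \<sigma> k) \<in> measurable (stream_space M) (\<Pi>\<^sub>M i\<in>(UNIV::nat set). M)"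
    by (rule measurable_PiM_single') (auto simp: space_stream_space streams_iff_snth)
  then show ?thesis unfolding perm_def by (rule measurable_compose[OF _ measurable_to_stream])
qed

lemma distr_perm:
  assumes "bij \<sigma>" and M: "prob_space M"
  shows "distr (stream_space M) (stream_space M) (perm \<sigma>) = stream_space M"
proof -
  let ?P = "\<Pi>\<^sub>M i\<in>(UNIV::nat set). M"
  have r: "distr ?P ?P (\<lambda>\<omega>. \<lambda>n\<in>UNIV. \<omega> (inv \<sigma> n)) = ?P"
    using distr_PiM_reindex[of UNIV "\<lambda>_. M" "inv \<sigma>" UNIV] M assms bij_is_inj bij_imp_bij_inv by auto
  have mr: "(\<lambda>\<omega>. \<lambda>n\<in>UNIV. \<omega> (inv \<sigma> n)) \<in> measurable ?P ?P"
    by measurable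
  have "distr (stream_space M) (stream_space M) (perm \<sigma>)
      = distr (distr ?P (stream_space M) to_stream) (stream_space M) (perm \<sigma>)"
    by (subst stream_space_eq_distr) (rule refl)
  also have "\<dots> = distr ?P (stream_space M) (perm \<sigma> \<circ> to_stream)"
    by (rule distr_distr) (auto simp: meas_perm)
  also have "perm \<sigma> \<circ> to_stream = to_stream \<circ> (\<lambda>\<omega>. \<lambda>n\<in>UNIV. \<omega> (inv \<sigma> n))"
    by (auto simp: perm_def to_stream_def fun_eq_iff restrict_def)
  also have "distr ?P (stream_space M) \<dots> = distr (distr ?P ?P (\<lambda>\<omega>. \<lambda>n\<in>UNIV. \<omega> (inv \<sigma> n))) (stream_space M) to_stream"
    by (rule distr_distr[symmetric]) (auto simp: mr)
  also have "\<dots> = stream_space M"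
    by (simp only: r stream_space_eq_distr[symmetric])
  finally show ?thesis .
qed

theorem propositionA1:
  fixes p :: "int uprod pmf"
  assumes "pmf p \<in> fin2_simplex"
  shows "edge_exchangeable (stream_space (measure_pmf p)) constr_X"
  unfolding edge_exchangeable_def
proof (intro allI impI ballI)
  fix \<sigma> :: "nat \<Rightarrow> nat" and A
  assume bs: "bij \<sigma>" and A: "A \<in> sets proc_space" and ri: "relabel_invariant A"
  let ?M = "stream_space (measure_pmf p)"
  have pM: "prob_space (measure_pmf p)" by (rule prob_space_measure_pmf)
  have mX: "constr_X \<in> measurable ?M proc_space" by (rule meas_proc[OF meas_Xk])
  have mXs: "(\<lambda>w. constr_X w \<circ> inv \<sigma>) \<in> measurable ?M proc_space"
    by (rule meas_proc) (simp add: meas_Xk)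
  have mXp: "(\<lambda>w. constr_X (perm \<sigma> w)) \<in> measurable ?M proc_space"
    by (rule measurable_compose[OF meas_perm mX])
  have "AE w in ?M. stream_all good w"
    by (rule prob_space.AE_stream_all[OF pM]) (auto simp: AE_measure_pmf_iff set_pmf_iff good_of_simplex[OF assms])
  then have ae: "AE w in ?M. (w \<in> (\<lambda>w. constr_X w \<circ> inv \<sigma>) -` A \<inter> space ?M
                 \<longleftrightarrow> w \<in> (\<lambda>w. constr_X (perm \<sigma> w)) -` A \<inter> space ?M)"
  proof (rule AE_mp, intro AE_I2 impI)
    fix w assume "stream_all good w"
    then have g: "\<forall>n. good (w !! n)" by (simp add: stream_all_def)
    obtain \<phi> where "bij \<phi>" and eq: "map_uprod \<phi> \<circ> (constr_X w \<circ> inv \<sigma>) = constr_X (perm \<sigma> w)"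
      using relabel[OF bs g perm_snth] by blast
    then have "(constr_X w \<circ> inv \<sigma>) \<in> A \<longleftrightarrow> constr_X (perm \<sigma> w) \<in> A"
      using ri unfolding relabel_invariant_def by metis
    then show "(w \<in> (\<lambda>w. constr_X w \<circ> inv \<sigma>) -` A \<inter> space ?M
                 \<longleftrightarrow> w \<in> (\<lambda>w. constr_X (perm \<sigma> w)) -` A \<inter> space ?M)" by simp
  qed
  have "emeasure (distr ?M proc_space (\<lambda>w. constr_X w \<circ> inv \<sigma>)) A
      = emeasure ?M ((\<lambda>w. constr_X w \<circ> inv \<sigma>) -` A \<inter> space ?M)"
    by (rule emeasure_distr[OF mXs A])
  also have "\<dots> = emeasure ?M ((\<lambda>w. constr_X (perm \<sigma> w)) -` A \<inter> space ?M)"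
    by (rule emeasure_eq_AE[OF ae]) (auto intro: measurable_sets[OF mXs A] measurable_sets[OF mXp A])
  also have "\<dots> = emeasure (distr ?M proc_space (constr_X \<circ> perm \<sigma>)) A"
    using emeasure_distr[OF mXp A] by (simp add: comp_def)
  also have "distr ?M proc_space (constr_X \<circ> perm \<sigma>) = distr (distr ?M ?M (perm \<sigma>)) proc_space constr_X"
    by (rule distr_distr[symmetric, OF mX meas_perm])
  also have "distr ?M ?M (perm \<sigma>) = ?M" by (rule distr_perm[OF bs pM])
  finally show "emeasure (distr ?M proc_space (\<lambda>w. constr_X w \<circ> inv \<sigma>)) A
      = emeasure (distr ?M proc_space constr_X) A" .
qed

end
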